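(* Let $G$ be a trigraph containing a fence gadget $F$ attached to a set $S$ and satisfying the attachment rule in $G$. In any partial $4$-sequence from $G$, the first contraction involving a pair consisting of a vertex of $V(F)$ and a vertex of $V(F)\cup S$ can only occur after $S$ has been contracted into a single vertex (i.e., at the moment of that contraction, $S$ is contained in a single part).
   Context: A trigraph $G$ consists of a vertex set $V(G)$ and two disjoint sets of unordered pairs of distinct vertices: black edges and red edges; the red graph is formed by the red edges. Contracting two distinct vertices $u,v$ replaces them by a new vertex $w$ such that, for every other vertex $z$, $wz$ is black if $uz,vz$ are both black, a non-edge if both are non-edges, and red otherwise. A partial $d$-sequence from $G$ is a sequence of trigraphs starting at $G$, each obtained from the previous by one contraction, all of maximum red degree at most $d$. Each vertex $u$ of a later trigraph corresponds to the set $u(G)$ (its part) of vertices of $G$ merged into it; a contraction of $u,u'$ involves a pair $v,v'$ of vertices of $G$ if $v\in u(G),v'\in u'(G)$ or vice versa. A fence gadget is a trigraph $F$ on $A\cup B$, $A=\{a_1,\dots,a_6\}$, $B=\{b_1,\dots,b_6\}$, whose black edges are those of the cycles $a_1a_2a_3a_4a_5a_6a_1$ and $b_1b_2b_3b_4b_5b_6b_1$ together with $b_1a_6$, and whose red edges are $a_ib_i$ for $i\in[6]$ and $a_ib_{i+1}$ for $i\in[5]$. Inside a trigraph $G$, $F$ is attached to a nonempty set $S\subseteq V(G)\setminus V(F)$ if every vertex of $A$ is joined by a black edge to every vertex of $S$ and no vertex of $B$ is adjacent to a vertex of $S$. $F$ satisfies the attachment rule in $G$ if $V(F)$ is the vertex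 set of a connected component of the red graph of $G$ and there is a set $X\subseteq V(G)\setminus(V(F)\cup S)$ such that every vertex of $A$ has exactly $X\cup S$ as its set of neighbours outside $V(F)$, every vertex of $B$ has exactly $X$ as its set of neighbours outside $V(F)$ (all these edges black), and every vertex of $X$ is adjacent to every vertex of $S$. *)

theory Defs
  imports Main
begin

record 'a trigraph =
  verts :: "'a set"
  blk   :: "'a set set"
  red   :: "'a set set"

definition wf_trigraph :: "'a trigraph \<Rightarrow> bool" where
  "wf_trigraph G \<longleftrightarrow> finite (verts G)
     \<and> blk G \<subseteq> {{x, y} | x y. x \<in> verts G \<and> y \<in> verts G \<and> x \<noteq> y}
     \<and> red G \<subseteq> {{x, y} | x y. x \<in> verts G \<and> y \<in> verts G \<and> x \<noteq> y}
     \<and> blk G \<inter> red G = {}"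

definition red_degree :: "'a trigraph \<Rightarrow> 'a \<Rightarrow> nat" where
  "red_degree T x = card {z \<in> verts T. {x, z} \<in> red T}"

definition max_red_deg_le :: "'a trigraph \<Rightarrow> nat \<Rightarrow> bool" where
  "max_red_deg_le T d \<longleftrightarrow> (\<forall>x \<in> verts T. red_degree T x \<le> d)"

text \<open>Trigraphs of a contraction sequence from G are represented with vertices being
  their parts (sets of vertices of G). The initial trigraph is G with every vertex v
  renamed to its part {v}.\<close>

definition lift :: "'v trigraph \<Rightarrow> 'v set trigraph" where
  "lift G = \<lparr> verts = (\<lambda>x. {x}) ` verts G,
              blk = (\<lambda>e. (\<lambda>x. {x}) ` e) ` blk G,
              red = (\<lambda>e. (\<lambda>x. {x}) ` e) ` red G \<rparr>"

definition contract :: "'v set trigraph \<Rightarrow> 'v set \<Rightarrow> 'v set \<Rightarrow> 'v set trigraph" where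
  "contract T u v = \<lparr>
     verts = insert (u \<union> v) (verts T - {u, v}),
     blk = {e \<in> blk T. u \<notin> e \<and> v \<notin> e}
           \<union> {{u \<union> v, z} | z. z \<in> verts T - {u, v} \<and> {u, z} \<in> blk T \<and> {v, z} \<in> blk T},
     red = {e \<in> red T. u \<notin> e \<and> v \<notin> e}
           \<union> {{u \<union> v, z} | z. z \<in> verts T - {u, v}
                 \<and> ({u, z} \<in> blk T \<union> red T \<or> {v, z} \<in> blk T \<union> red T)
                 \<and> \<not> ({u, z} \<in> blk T \<and> {v, z} \<in> blk T)} \<rparr>"

definition run :: "'v trigraph \<Rightarrow> ('v set \<times> 'v set) list \<Rightarrow> 'v set trigraph" where
  "run G ps = foldl (\<lambda>T (u, v). contract T u v) (lift G) ps"

definition partial_seq :: "nat \<Rightarrow> 'v trigraph \<Rightarrow> ('v set \<times> 'v set) list \<Rightarrow> bool" where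
  "partial_seq d G ps \<longleftrightarrow>
     (\<forall>i < length ps. fst (ps ! i) \<in> verts (run G (take i ps))
                    \<and> snd (ps ! i) \<in> verts (run G (take i ps))
                    \<and> fst (ps ! i) \<noteq> snd (ps ! i))
   \<and> (\<forall>i \<le> length ps. max_red_deg_le (run G (take i ps)) d)"

definition involves :: "'v set \<times> 'v set \<Rightarrow> 'v \<Rightarrow> 'v \<Rightarrow> bool" where
  "involves p x y \<longleftrightarrow> (x \<in> fst p \<and> y \<in> snd p) \<or> (x \<in> snd p \<and> y \<in> fst p)"

definition fenceV :: "(nat \<Rightarrow> 'v) \<Rightarrow> (nat \<Rightarrow> 'v) \<Rightarrow> 'v set" where
  "fenceV a b = a ` {1..6} \<union> b ` {1..6}"

definition fence_black :: "(nat \<Rightarrow> 'v) \<Rightarrow> (nat \<Rightarrow> 'v) \<Rightarrow> 'v set set" where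
  "fence_black a b =
     {{a i, a (Suc i)} | i. i \<in> {1..5}} \<union> {{a 6, a 1}}
   \<union> {{b i, b (Suc i)} | i. i \<in> {1..5}} \<union> {{b 6, b 1}}
   \<union> {{b 1, a 6}}"

definition fence_red :: "(nat \<Rightarrow> 'v) \<Rightarrow> (nat \<Rightarrow> 'v) \<Rightarrow> 'v set set" where
  "fence_red a b =
     {{a i, b i} | i. i \<in> {1..6}} \<union> {{a i, b (Suc i)} | i. i \<in> {1..5}}"

definition contains_fence :: "'v trigraph \<Rightarrow> (nat \<Rightarrow> 'v) \<Rightarrow> (nat \<Rightarrow> 'v) \<Rightarrow> bool" where
  "contains_fence G a b \<longleftrightarrow>
     inj_on a {1..6} \<and> inj_on b {1..6} \<and> a ` {1..6} \<inter> b ` {1..6} = {}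
   \<and> fenceV a b \<subseteq> verts G
   \<and> {e \<in> blk G. e \<subseteq> fenceV a b} = fence_black a b
   \<and> {e \<in> red G. e \<subseteq> fenceV a b} = fence_red a b"

definition adjacent :: "'v trigraph \<Rightarrow> 'v \<Rightarrow> 'v \<Rightarrow> bool" where
  "adjacent G x y \<longleftrightarrow> {x, y} \<in> blk G \<union> red G"

definition fence_attached :: "'v trigraph \<Rightarrow> (nat \<Rightarrow> 'v) \<Rightarrow> (nat \<Rightarrow> 'v) \<Rightarrow> 'v set \<Rightarrow> bool" where
  "fence_attached G a b S \<longleftrightarrow>
     S \<noteq> {} \<and> S \<subseteq> verts G - fenceV a b
   \<and> (\<forall>i \<in> {1..6}. \<forall>s \<in> S. {a i, s} \<in> blk G)
   \<and> (\<forall>i \<in> {1..6}. \<forall>s \<in> S. \<not> adjacent G (b i) s)"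

definition red_rel :: "'v trigraph \<Rightarrow> ('v \<times> 'v) set" where
  "red_rel G = {(x, y). x \<in> verts G \<and> y \<in> verts G \<and> {x, y} \<in> red G}"

definition red_component :: "'v trigraph \<Rightarrow> 'v \<Rightarrow> 'v set" where
  "red_component G x = {y. (x, y) \<in> (red_rel G)\<^sup>*}"

definition attachment_rule :: "'v trigraph \<Rightarrow> (nat \<Rightarrow> 'v) \<Rightarrow> (nat \<Rightarrow> 'v) \<Rightarrow> 'v set \<Rightarrow> bool" where
  "attachment_rule G a b S \<longleftrightarrow>
     (\<exists>x \<in> fenceV a b. red_component G x = fenceV a b)
   \<and> (\<exists>X. X \<subseteq> verts G - (fenceV a b \<union> S)
       \<and> (\<forall>i \<in> {1..6}. {z \<in> verts G - fenceV a b. adjacent G (a i) z} = X \<union> S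
                        \<and> (\<forall>z \<in> X \<union> S. {a i, z} \<in> blk G))
       \<and> (\<forall>i \<in> {1..6}. {z \<in> verts G - fenceV a b. adjacent G (b i) z} = X
                        \<and> (\<forall>z \<in> X. {b i, z} \<in> blk G))
       \<and> (\<forall>x \<in> X. \<forall>s \<in> S. adjacent G x s))"

end

theory Submission
  imports Defs
begin

definition fv :: "(nat \<Rightarrow> 'v) \<Rightarrow> (nat \<Rightarrow> 'v) \<Rightarrow> nat \<Rightarrow> 'v" where
  "fv a b k = (if k < 6 then a (Suc k) else b (k - 5))"
definition Eb :: "(nat \<times> nat) list" where
  "Eb = [(0,1),(1,2),(2,3),(3,4),(4,5),(5,0),(6,7),(7,8),(8,9),(9,10),(10,11),(11,6),(6,5)]"
definition Er :: "(nat \<times> nat) list" where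
  "Er = [(0,6),(1,7),(2,8),(3,9),(4,10),(5,11),(0,7),(1,8),(2,9),(3,10),(4,11)]"
lemma atl16: "{1..6::nat} = {1,2,3,4,5,6}" by auto
lemma atl15: "{1..5::nat} = {1,2,3,4,5}" by auto
lemma a12: "{0..<12::nat} = {0,1,2,3,4,5,6,7,8,9,10,11}" by (simp add: numeral_eq_Suc atLeastLessThanSuc insert_commute)

lemma fvs: "fv a b 0 = a 1" "fv a b 1 = a 2" "fv a b 2 = a 3" "fv a b 3 = a 4" "fv a b 4 = a 5" "fv a b 5 = a 6"
  "fv a b 6 = b 1" "fv a b 7 = b 2" "fv a b 8 = b 3" "fv a b 9 = b 4" "fv a b 10 = b 5" "fv a b 11 = b 6"
  by (simp_all add: fv_def numeral_eq_Suc)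

lemma c5: "{{f i, g (Suc i)} | i. i \<in> {1..5::nat}} = {{f 1, g 2}, {f 2, g 3}, {f 3, g 4}, {f 4, g 5}, {f 5, g 6}}"
proof -
  have "{{f i, g (Suc i)} | i. i \<in> {1..5::nat}} = (\<lambda>i. {f i, g (Suc i)}) ` {1,2,3,4,5}"
    unfolding atl15 by blast
  also have "\<dots> = {{f 1, g 2}, {f 2, g 3}, {f 3, g 4}, {f 4, g 5}, {f 5, g 6}}"
    by (simp add: numeral_eq_Suc)
  finally show ?thesis .
qed

lemma c6: "{{f i, g i} | i. i \<in> {1..6::nat}} = {{f 1, g 1}, {f 2, g 2}, {f 3, g 3}, {f 4, g 4}, {f 5, g 5}, {f 6, g 6}}"
proof -
  have "{{f i, g i} | i. i \<in> {1..6::nat}} = (\<lambda>i. {f i, g i}) ` {1,2,3,4,5,6}"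
    unfolding atl16 by blast
  then show ?thesis by simp
qed

lemma fenceV_eq: "fenceV a b = fv a b ` {0..<12}"
  unfolding fenceV_def a12 atl16 by (simp only: image_insert image_empty fvs Un_assoc Un_insert_left Un_empty_left)

lemma fb_eq: "fence_black a b = (\<lambda>(p,q). {fv a b p, fv a b q}) ` set Eb"
  unfolding fence_black_def c5 Eb_def by (simp only: list.set image_insert image_empty fvs prod.case Un_assoc Un_insert_left Un_empty_left)

lemma fr_eq: "fence_red a b = (\<lambda>(p,q). {fv a b p, fv a b q}) ` set Er"
  unfolding fence_red_def c5 c6 Er_def by (simp only: list.set image_insert image_empty fvs prod.case Un_assoc Un_insert_left Un_empty_left)

definition BLK :: "nat \<Rightarrow> nat \<Rightarrow> bool" where
  "BLK m n \<longleftrightarrow> (m,n) \<in> set Eb \<or> (n,m) \<in> set Eb"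
definition ADJ :: "nat \<Rightarrow> nat \<Rightarrow> bool" where
  "ADJ m n \<longleftrightarrow> BLK m n \<or> (m,n) \<in> set Er \<or> (n,m) \<in> set Er"

lemma comb1': "\<forall>m\<in>set [0..<12]. \<forall>n\<in>set [0..<12]. m\<noteq>n \<longrightarrow> (if (m<6)=(n<6) then 5 else 3) \<le> length (filter (\<lambda>f. f\<noteq>m \<and> f\<noteq>n \<and> (ADJ m f \<or> ADJ n f) \<and> (\<not>BLK m f \<or> \<not> BLK n f)) [0..<12])"
  by code_simp
lemma comb2': "\<forall>m\<in>set [0..<12]. 5 \<le> length (filter (\<lambda>f. f\<noteq>m \<and> (ADJ m f \<or> f < 6) \<and> (\<not>BLK m f \<or> 6 \<le> f)) [0..<12])"
  by code_simp

lemma card_filter_upt: "card {f. f < k \<and> P f} = length (filter P [0..<k])"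
proof -
  have "{f. f < k \<and> P f} = set (filter P [0..<k])" by auto
  moreover have "card (set (filter P [0..<k])) = length (filter P [0..<k])" by (rule distinct_card) simp
  ultimately show ?thesis by simp
qed

lemma fv_inj:
  assumes "contains_fence G a b"
  shows "inj_on (fv a b) {0..<12}"
proof (rule inj_onI)
  fix m n assume m: "m \<in> {0..<12::nat}" and n: "n \<in> {0..<12::nat}" and e: "fv a b m = fv a b n"
  have ia: "inj_on a {1..6}" and ib: "inj_on b {1..6}" and d: "a ` {1..6} \<inter> b ` {1..6} = {}"
    using assms unfolding contains_fence_def by auto
  show "m = n"
  proof (cases "m < 6")
    case True
    then have am: "Suc m \<in> {1..6}" by auto
    show ?thesis
    proof (cases "n < 6")
      case True
      then have "Suc n \<in> {1..6}" by auto
      moreover have "a (Suc m) = a (Suc n)" using e \<open>m<6\<close> True by (simp add: fv_def)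
      ultimately have "Suc m = Suc n" using inj_onD[OF ia] am by blast
      then show ?thesis by simp
    next
      case False
      then have "n - 5 \<in> {1..6}" using n by auto
      moreover have "a (Suc m) = b (n - 5)" using e \<open>m<6\<close> False by (simp add: fv_def)
      ultimately have False using am d by blast
      then show ?thesis ..
    qed
  next
    case False
    then have bm: "m - 5 \<in> {1..6}" using m by auto
    show ?thesis
    proof (cases "n < 6")
      case True
      then have "Suc n \<in> {1..6}" by auto
      moreover have "a (Suc n) = b (m - 5)" using e \<open>\<not> m<6\<close> True by (simp add: fv_def)
      ultimately have False using bm d by blast
      then show ?thesis ..
    next
      case False2: False
      then have "n - 5 \<in> {1..6}" using n by auto
      with bm e False False2 ib m n have "m - 5 = n - 5" by (auto simp: fv_def inj_on_def)
      then show ?thesis using False False2 by simp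
    qed
  qed
qed

lemma img_pair_iff:
  assumes "inj_on f A" "m \<in> A" "n \<in> A" "\<forall>(p,q)\<in>set E. p \<in> A \<and> q \<in> A"
  shows "{f m, f n} \<in> (\<lambda>(p,q). {f p, f q}) ` set E \<longleftrightarrow> (m,n) \<in> set E \<or> (n,m) \<in> set E"
proof
  assume "{f m, f n} \<in> (\<lambda>(p,q). {f p, f q}) ` set E"
  then obtain p q where pq: "(p,q) \<in> set E" "{f m, f n} = {f p, f q}" by auto
  with assms have "p \<in> A" "q \<in> A" by auto
  with pq(2) assms(1-3) have "(m = p \<and> n = q) \<or> (m = q \<and> n = p)"
    by (auto simp: doubleton_eq_iff inj_on_eq_iff)
  with pq(1) show "(m,n) \<in> set E \<or> (n,m) \<in> set E" by auto
next
  assume "(m,n) \<in> set E \<or> (n,m) \<in> set E"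
  then show "{f m, f n} \<in> (\<lambda>(p,q). {f p, f q}) ` set E"
    by (auto simp: insert_commute intro: rev_image_eqI)
qed

lemma blk_iff:
  assumes "contains_fence G a b" "m < 12" "n < 12"
  shows "{fv a b m, fv a b n} \<in> blk G \<longleftrightarrow> BLK m n"
proof -
  have sub: "{fv a b m, fv a b n} \<subseteq> fenceV a b" using assms(2,3) by (auto simp: fenceV_eq)
  have "{e \<in> blk G. e \<subseteq> fenceV a b} = fence_black a b" using assms(1) by (simp add: contains_fence_def)
  then have "{fv a b m, fv a b n} \<in> blk G \<longleftrightarrow> {fv a b m, fv a b n} \<in> fence_black a b"
    using sub by blast
  also have "\<dots> \<longleftrightarrow> BLK m n" unfolding fb_eq BLK_def
    by (rule img_pair_iff[OF fv_inj[OF assms(1)]]) (use assms(2,3) in \<open>auto simp: Eb_def\<close>)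
  finally show ?thesis .
qed

lemma red_iff:
  assumes "contains_fence G a b" "m < 12" "n < 12"
  shows "{fv a b m, fv a b n} \<in> red G \<longleftrightarrow> (m,n) \<in> set Er \<or> (n,m) \<in> set Er"
proof -
  have sub: "{fv a b m, fv a b n} \<subseteq> fenceV a b" using assms(2,3) by (auto simp: fenceV_eq)
  have "{e \<in> red G. e \<subseteq> fenceV a b} = fence_red a b" using assms(1) by (simp add: contains_fence_def)
  then have "{fv a b m, fv a b n} \<in> red G \<longleftrightarrow> {fv a b m, fv a b n} \<in> fence_red a b"
    using sub by blast
  also have "\<dots> \<longleftrightarrow> (m,n) \<in> set Er \<or> (n,m) \<in> set Er" unfolding fr_eq
    by (rule img_pair_iff[OF fv_inj[OF assms(1)]]) (use assms(2,3) in \<open>auto simp: Er_def\<close>)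
  finally show ?thesis .
qed

lemma adj_iff:
  assumes "contains_fence G a b" "m < 12" "n < 12"
  shows "{fv a b m, fv a b n} \<in> blk G \<union> red G \<longleftrightarrow> ADJ m n"
  using blk_iff[OF assms] red_iff[OF assms] unfolding ADJ_def by blast

lemma fvS:
  assumes "fence_attached G a b S" "k < 12" "s \<in> S"
  shows "k < 6 \<Longrightarrow> {fv a b k, s} \<in> blk G" and "\<not> k < 6 \<Longrightarrow> {fv a b k, s} \<notin> blk G \<union> red G"
proof -
  assume "k < 6"
  then have "Suc k \<in> {1..6}" by auto
  then show "{fv a b k, s} \<in> blk G" using assms \<open>k<6\<close> by (auto simp: fence_attached_def fv_def)
next
  assume "\<not> k < 6"
  then have "k - 5 \<in> {1..6}" using assms(2) by auto
  then show "{fv a b k, s} \<notin> blk G \<union> red G" using assms \<open>\<not> k<6\<close>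
    by (auto simp: fence_attached_def fv_def adjacent_def)
qed



definition tinv :: "'v trigraph \<Rightarrow> 'v set trigraph \<Rightarrow> bool" where
"tinv G T \<longleftrightarrow> finite (verts T) \<and> (\<forall>U\<in>verts T. U \<noteq> {} \<and> U \<subseteq> verts G)
  \<and> (\<forall>U\<in>verts T. \<forall>V\<in>verts T. U \<noteq> V \<longrightarrow> U \<inter> V = {})
  \<and> \<Union>(verts T) = verts G
  \<and> (\<forall>e \<in> blk T \<union> red T. \<exists>U V. e = {U,V} \<and> U \<in> verts T \<and> V \<in> verts T \<and> U \<noteq> V)
  \<and> (\<forall>U\<in>verts T. \<forall>V\<in>verts T. U \<noteq> V \<longrightarrow> {U,V} \<in> blk T \<longrightarrow> (\<forall>p\<in>U. \<forall>q\<in>V. {p,q} \<in> blk G))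
  \<and> (\<forall>U\<in>verts T. \<forall>V\<in>verts T. U \<noteq> V \<longrightarrow> (\<exists>p\<in>U. \<exists>q\<in>V. {p,q} \<in> blk G \<union> red G) \<longrightarrow> {U,V} \<in> blk T \<union> red T)"

lemma inv_lift:
  assumes "wf_trigraph G"
  shows "tinv G (lift G)"
proof -
  have wf: "finite (verts G)" "\<And>e. e \<in> blk G \<union> red G \<Longrightarrow> \<exists>x y. e = {x,y} \<and> x \<in> verts G \<and> y \<in> verts G \<and> x \<noteq> y"
  proof -
    have W: "finite (verts G) \<and> blk G \<subseteq> {{x, y} | x y. x \<in> verts G \<and> y \<in> verts G \<and> x \<noteq> y}
     \<and> red G \<subseteq> {{x, y} | x y. x \<in> verts G \<and> y \<in> verts G \<and> x \<noteq> y}" using assms unfolding wf_trigraph_def by blast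
    then show "finite (verts G)" by blast
    fix e assume "e \<in> blk G \<union> red G"
    then have "e \<in> {{x, y} | x y. x \<in> verts G \<and> y \<in> verts G \<and> x \<noteq> y}" using W by blast
    then show "\<exists>x y. e = {x,y} \<and> x \<in> verts G \<and> y \<in> verts G \<and> x \<noteq> y" by blast
  qed
  have I0: "\<forall>e \<in> blk (lift G) \<union> red (lift G). \<exists>U V. e = {U,V} \<and> U \<in> verts (lift G) \<and> V \<in> verts (lift G) \<and> U \<noteq> V"
  proof
    fix e assume "e \<in> blk (lift G) \<union> red (lift G)"
    then obtain e' where e': "e' \<in> blk G \<union> red G" "e = (\<lambda>x. {x}) ` e'" by (auto simp: lift_def)
    then obtain x y where "e' = {x,y}" "x \<in> verts G" "y \<in> verts G" "x \<noteq> y" using wf(2) by blast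
    then show "\<exists>U V. e = {U,V} \<and> U \<in> verts (lift G) \<and> V \<in> verts (lift G) \<and> U \<noteq> V"
      using e' by (intro exI[of _ "{x}"] exI[of _ "{y}"]) (auto simp: lift_def)
  qed
  have I5: "\<forall>U\<in>verts (lift G). \<forall>V\<in>verts (lift G). U \<noteq> V \<longrightarrow> {U,V} \<in> blk (lift G) \<longrightarrow> (\<forall>p\<in>U. \<forall>q\<in>V. {p,q} \<in> blk G)"
  proof (intro ballI impI)
    fix U V p q assume U: "U \<in> verts (lift G)" and V: "V \<in> verts (lift G)" and "U \<noteq> V"
      and b: "{U,V} \<in> blk (lift G)" and p: "p \<in> U" and q: "q \<in> V"
    from U V p q have "U = {p}" "V = {q}" by (auto simp: lift_def)
    from b obtain e' where e': "e' \<in> blk G" "{U,V} = (\<lambda>x. {x}) ` e'" by (auto simp: lift_def)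
    then obtain x y where xy: "e' = {x,y}" using wf(2) by blast
    with e' \<open>U = {p}\<close> \<open>V = {q}\<close> have "{{p},{q}} = {{x},{y}}" by simp
    then have "{p,q} = {x,y}" by (auto simp: doubleton_eq_iff)
    then show "{p,q} \<in> blk G" using e' xy by simp
  qed
  have I6: "\<forall>U\<in>verts (lift G). \<forall>V\<in>verts (lift G). U \<noteq> V \<longrightarrow> (\<exists>p\<in>U. \<exists>q\<in>V. {p,q} \<in> blk G \<union> red G) \<longrightarrow> {U,V} \<in> blk (lift G) \<union> red (lift G)"
  proof (intro ballI impI)
    fix U V assume U: "U \<in> verts (lift G)" and V: "V \<in> verts (lift G)" and "U \<noteq> V"
      and "\<exists>p\<in>U. \<exists>q\<in>V. {p,q} \<in> blk G \<union> red G"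
    then obtain p q where p: "p \<in> U" and q: "q \<in> V" and pq: "{p,q} \<in> blk G \<union> red G" by blast
    from U V p q have "U = {p}" "V = {q}" by (auto simp: lift_def)
    then have "{U,V} = (\<lambda>x. {x}) ` {p,q}" by simp
    moreover have "(\<lambda>x. {x}) ` {p,q} \<in> (\<lambda>e. (\<lambda>x. {x}) ` e) ` blk G \<union> (\<lambda>e. (\<lambda>x. {x}) ` e) ` red G"
      using pq by (metis UnE UnI1 UnI2 imageI)
    ultimately show "{U,V} \<in> blk (lift G) \<union> red (lift G)" unfolding lift_def by simp
  qed
  have K1: "finite (verts (lift G))" using wf(1) by (simp add: lift_def)
  have K2: "\<forall>U\<in>verts (lift G). U \<noteq> {} \<and> U \<subseteq> verts G" by (auto simp: lift_def)
  have K3: "\<forall>U\<in>verts (lift G). \<forall>V\<in>verts (lift G). U \<noteq> V \<longrightarrow> U \<inter> V = {}" by (auto simp: lift_def)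
  have K4: "\<Union>(verts (lift G)) = verts G" by (auto simp: lift_def)
  show ?thesis unfolding tinv_def by (intro conjI K1 K2 K3 K4 I0 I5 I6)
qed

lemma inv_contract:
  assumes inv: "tinv G T" and u: "u \<in> verts T" and v: "v \<in> verts T" and uv: "u \<noteq> v"
  shows "tinv G (contract T u v)"
proof -
  let ?w = "u \<union> v"
  let ?T = "contract T u v"
  have fin: "finite (verts T)" and ne: "\<And>U. U \<in> verts T \<Longrightarrow> U \<noteq> {} \<and> U \<subseteq> verts G"
    and dj: "\<And>U V. U \<in> verts T \<Longrightarrow> V \<in> verts T \<Longrightarrow> U \<noteq> V \<Longrightarrow> U \<inter> V = {}"
    and un: "\<Union>(verts T) = verts G"
    and I0: "\<And>e. e \<in> blk T \<union> red T \<Longrightarrow> \<exists>U V. e = {U,V} \<and> U \<in> verts T \<and> V \<in> verts T \<and> U \<noteq> V"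
    and I5: "\<And>U V p q. U \<in> verts T \<Longrightarrow> V \<in> verts T \<Longrightarrow> U \<noteq> V \<Longrightarrow> {U,V} \<in> blk T \<Longrightarrow> p \<in> U \<Longrightarrow> q \<in> V \<Longrightarrow> {p,q} \<in> blk G"
    and I6: "\<And>U V p q. U \<in> verts T \<Longrightarrow> V \<in> verts T \<Longrightarrow> U \<noteq> V \<Longrightarrow> p \<in> U \<Longrightarrow> q \<in> V \<Longrightarrow> {p,q} \<in> blk G \<union> red G \<Longrightarrow> {U,V} \<in> blk T \<union> red T"
  proof -
    note H = inv[unfolded tinv_def]
    note H1 = H[THEN conjunct1]
    note H2 = H[THEN conjunct2, THEN conjunct1]
    note H3 = H[THEN conjunct2, THEN conjunct2, THEN conjunct1]
    note H4 = H[THEN conjunct2, THEN conjunct2, THEN conjunct2, THEN conjunct1]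
    note H5 = H[THEN conjunct2, THEN conjunct2, THEN conjunct2, THEN conjunct2, THEN conjunct1]
    note H6 = H[THEN conjunct2, THEN conjunct2, THEN conjunct2, THEN conjunct2, THEN conjunct2, THEN conjunct1]
    note H7 = H[THEN conjunct2, THEN conjunct2, THEN conjunct2, THEN conjunct2, THEN conjunct2, THEN conjunct2]
    show "finite (verts T)" by (rule H1)
    show "\<And>U. U \<in> verts T \<Longrightarrow> U \<noteq> {} \<and> U \<subseteq> verts G" using H2 by blast
    show "\<And>U V. U \<in> verts T \<Longrightarrow> V \<in> verts T \<Longrightarrow> U \<noteq> V \<Longrightarrow> U \<inter> V = {}" using H3 by blast
    show "\<Union>(verts T) = verts G" by (rule H4)
    show "\<And>e. e \<in> blk T \<union> red T \<Longrightarrow> \<exists>U V. e = {U,V} \<and> U \<in> verts T \<and> V \<in> verts T \<and> U \<noteq> V" using H5 by blast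
    show "\<And>U V p q. U \<in> verts T \<Longrightarrow> V \<in> verts T \<Longrightarrow> U \<noteq> V \<Longrightarrow> {U,V} \<in> blk T \<Longrightarrow> p \<in> U \<Longrightarrow> q \<in> V \<Longrightarrow> {p,q} \<in> blk G" using H6 by blast
    show "\<And>U V p q. U \<in> verts T \<Longrightarrow> V \<in> verts T \<Longrightarrow> U \<noteq> V \<Longrightarrow> p \<in> U \<Longrightarrow> q \<in> V \<Longrightarrow> {p,q} \<in> blk G \<union> red G \<Longrightarrow> {U,V} \<in> blk T \<union> red T" using H7 by blast
  qed
  have vT: "verts ?T = insert ?w (verts T - {u,v})" by (simp add: contract_def)
  have zw: "\<And>z. z \<in> verts T - {u,v} \<Longrightarrow> z \<noteq> ?w \<and> z \<inter> ?w = {}"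
  proof -
    fix z assume z: "z \<in> verts T - {u,v}"
    then have "z \<inter> u = {}" "z \<inter> v = {}" using dj u v by blast+
    moreover have "z \<noteq> {}" using ne z by blast
    ultimately show "z \<noteq> ?w \<and> z \<inter> ?w = {}" by blast
  qed
  have wnot: "?w \<notin> verts T"
  proof
    assume "?w \<in> verts T"
    moreover have "?w \<noteq> u"
    proof
      assume "?w = u" then have "v \<subseteq> u" by blast
      moreover have "u \<inter> v = {}" using dj u v uv by blast
      moreover have "v \<noteq> {}" using ne v by blast
      ultimately show False by blast
    qed
    ultimately have "?w \<inter> u = {}" using dj u by blast
    moreover have "u \<noteq> {}" using ne u by blast
    ultimately show False by blast
  qed
  have blkT: "blk ?T = {e \<in> blk T. u \<notin> e \<and> v \<notin> e}
           \<union> {{?w, z} | z. z \<in> verts T - {u, v} \<and> {u, z} \<in> blk T \<and> {v, z} \<in> blk T}"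
    by (simp add: contract_def)
  have redT: "red ?T = {e \<in> red T. u \<notin> e \<and> v \<notin> e}
           \<union> {{?w, z} | z. z \<in> verts T - {u, v}
                 \<and> ({u, z} \<in> blk T \<union> red T \<or> {v, z} \<in> blk T \<union> red T)
                 \<and> \<not> ({u, z} \<in> blk T \<and> {v, z} \<in> blk T)}"
    by (simp add: contract_def)
  have J0: "\<forall>e \<in> blk ?T \<union> red ?T. \<exists>U V. e = {U,V} \<and> U \<in> verts ?T \<and> V \<in> verts ?T \<and> U \<noteq> V"
  proof
    fix e assume e: "e \<in> blk ?T \<union> red ?T"
    show "\<exists>U V. e = {U,V} \<and> U \<in> verts ?T \<and> V \<in> verts ?T \<and> U \<noteq> V"
    proof (cases "e \<in> blk T \<union> red T \<and> u \<notin> e \<and> v \<notin> e")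
      case True
      then have "e \<in> blk T \<union> red T" by simp
      then have "\<exists>U V. e = {U,V} \<and> U \<in> verts T \<and> V \<in> verts T \<and> U \<noteq> V" by (rule I0)
      then obtain U V where UV: "e = {U,V}" "U \<in> verts T" "V \<in> verts T" "U \<noteq> V" by (elim exE conjE)
      with True have "U \<in> verts ?T" "V \<in> verts ?T" unfolding vT by auto
      with UV show ?thesis by blast
    next
      case False
      with e obtain z where "e = {?w, z}" "z \<in> verts T - {u,v}" unfolding blkT redT by blast
      moreover from this zw[of z] have "?w \<in> verts ?T" "z \<in> verts ?T" "?w \<noteq> z" unfolding vT by auto
      ultimately show ?thesis by blast
    qed
  qed
  have J5: "\<forall>U\<in>verts ?T. \<forall>V\<in>verts ?T. U \<noteq> V \<longrightarrow> {U,V} \<in> blk ?T \<longrightarrow> (\<forall>p\<in>U. \<forall>q\<in>V. {p,q} \<in> blk G)"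
  proof (intro ballI impI)
    fix U V p q assume U: "U \<in> verts ?T" and V: "V \<in> verts ?T" and UV: "U \<noteq> V"
      and b: "{U,V} \<in> blk ?T" and p: "p \<in> U" and q: "q \<in> V"
    from b consider (old) "{U,V} \<in> blk T" "u \<notin> {U,V}" "v \<notin> {U,V}"
      | (new) z where "{U,V} = {?w, z}" "z \<in> verts T - {u,v}" "{u, z} \<in> blk T" "{v, z} \<in> blk T"
      unfolding blkT by blast
    then show "{p,q} \<in> blk G"
    proof cases
      case old
      then have "{U,V} \<in> blk T \<union> red T" by simp
      then have "\<exists>X Y. {U,V} = {X,Y} \<and> X \<in> verts T \<and> Y \<in> verts T \<and> X \<noteq> Y" by (rule I0)
      then obtain X Y where XY: "{U,V} = {X,Y}" "X \<in> verts T" "Y \<in> verts T" by (elim exE conjE)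
      then have "U \<in> verts T" "V \<in> verts T" by (auto simp: doubleton_eq_iff)
      then show ?thesis using I5 old(1) UV p q by blast
    next
      case new
      have zu: "z \<noteq> u" "z \<noteq> v" using new(2) by auto
      from new(1) have "(U = ?w \<and> V = z) \<or> (U = z \<and> V = ?w)" by (auto simp: doubleton_eq_iff)
      then show ?thesis
      proof
        assume "U = ?w \<and> V = z"
        then show ?thesis using p q I5[of u z p q] I5[of v z p q] u v new zu by auto
      next
        assume "U = z \<and> V = ?w"
        then show ?thesis using p q I5[of z u p q] I5[of z v p q] u v new zu by (auto simp: insert_commute)
      qed
    qed
  qed
  have J6: "\<forall>U\<in>verts ?T. \<forall>V\<in>verts ?T. U \<noteq> V \<longrightarrow> (\<exists>p\<in>U. \<exists>q\<in>V. {p,q} \<in> blk G \<union> red G) \<longrightarrow> {U,V} \<in> blk ?T \<union> red ?T"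
  proof (intro ballI impI)
    fix U V assume U: "U \<in> verts ?T" and V: "V \<in> verts ?T" and UV: "U \<noteq> V"
      and "\<exists>p\<in>U. \<exists>q\<in>V. {p,q} \<in> blk G \<union> red G"
    then obtain p q where p: "p \<in> U" and q: "q \<in> V" and pq: "{p,q} \<in> blk G \<union> red G" by blast
    have new: "{?w, z} \<in> blk ?T \<union> red ?T" if z: "z \<in> verts T - {u,v}" and adj: "{u, z} \<in> blk T \<union> red T \<or> {v, z} \<in> blk T \<union> red T" for z
    proof (cases "{u, z} \<in> blk T \<and> {v, z} \<in> blk T")
      case True then show ?thesis unfolding blkT using z by blast
    next
      case False then show ?thesis unfolding redT using z adj by blast
    qed
    show "{U,V} \<in> blk ?T \<union> red ?T"
    proof (cases "U = ?w")
      case True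
      then have Vz: "V \<in> verts T - {u,v}" using V UV unfolding vT by auto
      have "{u, V} \<in> blk T \<union> red T \<or> {v, V} \<in> blk T \<union> red T"
        using p True I6[of u V p q] I6[of v V p q] u v Vz q pq by auto
      then show ?thesis using new[OF Vz] True by simp
    next
      case False
      note UF = False
      show ?thesis
      proof (cases "V = ?w")
        case True
        then have Uz: "U \<in> verts T - {u,v}" using U UF unfolding vT by auto
        have "{p,q} = {q,p}" by (simp add: insert_commute)
        then have "{u, U} \<in> blk T \<union> red T \<or> {v, U} \<in> blk T \<union> red T"
          using q True I6[of u U q p] I6[of v U q p] u v Uz p pq by auto
        then show ?thesis using new[OF Uz] True by (simp add: insert_commute)
      next
        case False
        then have "U \<in> verts T - {u,v}" "V \<in> verts T - {u,v}" using U V UF unfolding vT by auto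
        then have "{U,V} \<in> blk T \<union> red T" "u \<notin> {U,V}" "v \<notin> {U,V}" using I6 UV p q pq by auto
        then show ?thesis unfolding blkT redT by blast
      qed
    qed
  qed
  have K1: "finite (verts ?T)" using fin vT by simp
  have K2: "\<forall>U\<in>verts ?T. U \<noteq> {} \<and> U \<subseteq> verts G" using ne u v unfolding vT by blast
  have K3: "\<forall>U\<in>verts ?T. \<forall>V\<in>verts ?T. U \<noteq> V \<longrightarrow> U \<inter> V = {}"
    unfolding vT using dj zw by blast
  have K4: "\<Union>(verts ?T) = verts G" using un u v unfolding vT by blast
  show ?thesis unfolding tinv_def by (intro conjI K1 K2 K3 K4 J0 J5 J6)
qed



lemma run_Suc:
  assumes "k < length ps"
  shows "run G (take (Suc k) ps) = contract (run G (take k ps)) (fst (ps!k)) (snd (ps!k))"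
proof -
  have "take (Suc k) ps = take k ps @ [ps!k]" using assms by (simp add: take_Suc_conv_app_nth)
  then show ?thesis by (simp add: run_def split_beta)
qed

lemma run_0: "run G (take 0 ps) = lift G" by (simp add: run_def)

lemma inv_run:
  assumes "wf_trigraph G" "partial_seq d G ps" "k \<le> length ps"
  shows "tinv G (run G (take k ps))"
  using assms(3)
proof (induction k)
  case 0
  then show ?case using inv_lift[OF assms(1)] by (simp add: run_def)
next
  case (Suc k)
  then have k: "k < length ps" by simp
  have "fst (ps!k) \<in> verts (run G (take k ps))" "snd (ps!k) \<in> verts (run G (take k ps))" "fst (ps!k) \<noteq> snd (ps!k)"
    using assms(2) k unfolding partial_seq_def by blast+
  then show ?case using Suc inv_contract run_Suc[OF k] by simp
qed

definition noFS :: "'v set \<Rightarrow> 'v set \<Rightarrow> 'v set trigraph \<Rightarrow> bool" where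
  "noFS F S T \<longleftrightarrow> (\<forall>U\<in>verts T. \<forall>x\<in>U. \<forall>y\<in>U. x \<in> F \<longrightarrow> y \<in> F \<union> S \<longrightarrow> x = y)"

lemma noFS_contract:
  assumes "noFS F S T" "u \<in> verts T" "v \<in> verts T"
    and "\<not> (\<exists>x \<in> F. \<exists>y \<in> F \<union> S. involves (u,v) x y)"
  shows "noFS F S (contract T u v)"
  unfolding noFS_def
proof (intro ballI impI)
  fix U x y assume U: "U \<in> verts (contract T u v)" and x: "x \<in> U" and y: "y \<in> U" and xF: "x \<in> F" and yF: "y \<in> F \<union> S"
  have "U = u \<union> v \<or> U \<in> verts T" using U by (auto simp: contract_def)
  then show "x = y"
  proof
    assume Uw: "U = u \<union> v"
    have nI: "\<not> involves (u,v) x y" using assms(4) xF yF by blast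
    show "x = y"
    proof (cases "x \<in> u")
      case True
      then have "y \<notin> v" using nI by (simp add: involves_def)
      then have "y \<in> u" using y Uw by blast
      then show ?thesis using assms(1,2) True xF yF unfolding noFS_def by blast
    next
      case False
      then have xv: "x \<in> v" using x Uw by blast
      then have "y \<notin> u" using nI by (simp add: involves_def)
      then have "y \<in> v" using y Uw by blast
      then show ?thesis using assms(1,3) xv xF yF unfolding noFS_def by blast
    qed
  next
    assume "U \<in> verts T"
    then show "x = y" using assms(1) x y xF yF unfolding noFS_def by blast
  qed
qed

lemma noFS_run:
  assumes "partial_seq d G ps" "k \<le> i" "i < length ps"
    and "\<forall>j < i. \<not> (\<exists>x \<in> F. \<exists>y \<in> F \<union> S. involves (ps ! j) x y)"
  shows "noFS F S (run G (take k ps))"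
  using assms(2)
proof (induction k)
  case 0
  then show ?case by (auto simp: run_def lift_def noFS_def)
next
  case (Suc k)
  then have k: "k < length ps" "k < i" using assms(3) by simp_all
  have m: "fst (ps!k) \<in> verts (run G (take k ps))" "snd (ps!k) \<in> verts (run G (take k ps))"
    using assms(1) k unfolding partial_seq_def by blast+
  have n: "\<not> (\<exists>x \<in> F. \<exists>y \<in> F \<union> S. involves (fst (ps!k), snd (ps!k)) x y)"
    using assms(4) k(2) by simp
  have IH: "noFS F S (run G (take k ps))" using Suc by simp
  show ?case unfolding run_Suc[OF k(1)] using noFS_contract[OF IH m n] .
qed



lemma tinvD:
  assumes inv: "tinv G T"
  shows "finite (verts T)" and "\<And>U. U \<in> verts T \<Longrightarrow> U \<noteq> {} \<and> U \<subseteq> verts G"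
    and "\<And>U V. U \<in> verts T \<Longrightarrow> V \<in> verts T \<Longrightarrow> U \<noteq> V \<Longrightarrow> U \<inter> V = {}"
    and "\<Union>(verts T) = verts G"
    and "\<And>U V p q. U \<in> verts T \<Longrightarrow> V \<in> verts T \<Longrightarrow> U \<noteq> V \<Longrightarrow> {U,V} \<in> blk T \<Longrightarrow> p \<in> U \<Longrightarrow> q \<in> V \<Longrightarrow> {p,q} \<in> blk G"
    and "\<And>U V p q. U \<in> verts T \<Longrightarrow> V \<in> verts T \<Longrightarrow> U \<noteq> V \<Longrightarrow> p \<in> U \<Longrightarrow> q \<in> V \<Longrightarrow> {p,q} \<in> blk G \<union> red G \<Longrightarrow> {U,V} \<in> blk T \<union> red T"
proof -
    note H = inv[unfolded tinv_def]
    note H1 = H[THEN conjunct1]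
    note H2 = H[THEN conjunct2, THEN conjunct1]
    note H3 = H[THEN conjunct2, THEN conjunct2, THEN conjunct1]
    note H4 = H[THEN conjunct2, THEN conjunct2, THEN conjunct2, THEN conjunct1]
    note H6 = H[THEN conjunct2, THEN conjunct2, THEN conjunct2, THEN conjunct2, THEN conjunct2, THEN conjunct1]
    note H7 = H[THEN conjunct2, THEN conjunct2, THEN conjunct2, THEN conjunct2, THEN conjunct2, THEN conjunct2]
    show "finite (verts T)" by (rule H1)
    show "\<And>U. U \<in> verts T \<Longrightarrow> U \<noteq> {} \<and> U \<subseteq> verts G" using H2 by blast
    show "\<And>U V. U \<in> verts T \<Longrightarrow> V \<in> verts T \<Longrightarrow> U \<noteq> V \<Longrightarrow> U \<inter> V = {}" using H3 by blast
    show "\<Union>(verts T) = verts G" by (rule H4)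
    show "\<And>U V p q. U \<in> verts T \<Longrightarrow> V \<in> verts T \<Longrightarrow> U \<noteq> V \<Longrightarrow> {U,V} \<in> blk T \<Longrightarrow> p \<in> U \<Longrightarrow> q \<in> V \<Longrightarrow> {p,q} \<in> blk G" using H6 by blast
    show "\<And>U V p q. U \<in> verts T \<Longrightarrow> V \<in> verts T \<Longrightarrow> U \<noteq> V \<Longrightarrow> p \<in> U \<Longrightarrow> q \<in> V \<Longrightarrow> {p,q} \<in> blk G \<union> red G \<Longrightarrow> {U,V} \<in> blk T \<union> red T" using H7 by blast
qed

definition pt :: "'v set trigraph \<Rightarrow> 'v \<Rightarrow> 'v set" where
  "pt T p = (THE U. U \<in> verts T \<and> p \<in> U)"

lemma pt_eq:
  assumes "tinv G T" "U \<in> verts T" "p \<in> U"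
  shows "pt T p = U"
  unfolding pt_def
proof (rule the_equality)
  show "U \<in> verts T \<and> p \<in> U" using assms by simp
  fix V assume "V \<in> verts T \<and> p \<in> V"
  then show "V = U" using tinvD(3)[OF assms(1), of V U] assms by blast
qed

lemma pt_mem:
  assumes "tinv G T" "p \<in> verts G"
  shows "pt T p \<in> verts T" "p \<in> pt T p"
proof -
  from assms tinvD(4)[OF assms(1)] obtain U where "U \<in> verts T" "p \<in> U" by blast
  then show "pt T p \<in> verts T" "p \<in> pt T p" using pt_eq[OF assms(1)] by simp_all
qed

definition Zs :: "'v set trigraph \<Rightarrow> 'v set \<Rightarrow> 'v set \<Rightarrow> 'v set set" where
  "Zs T u u' = {z \<in> verts T - {u,u'}. ({u,z} \<in> blk T \<union> red T \<or> {u',z} \<in> blk T \<union> red T)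
       \<and> \<not> ({u,z} \<in> blk T \<and> {u',z} \<in> blk T)}"

lemma Zs_sym: "Zs T u u' = Zs T u' u"
  unfolding Zs_def by blast

lemma zin:
  assumes inv: "tinv G T" and u: "u \<in> verts T" and u': "u' \<in> verts T" and z: "z \<in> verts T"
    and zu: "z \<noteq> u" "z \<noteq> u'"
    and p1: "p1 \<in> u \<union> u'" and q1: "q1 \<in> z" and a1: "{p1,q1} \<in> blk G \<union> red G"
    and p2: "p2 \<in> u \<union> u'" and q2: "q2 \<in> z" and a2: "{p2,q2} \<notin> blk G"
  shows "z \<in> Zs T u u'"
proof -
  have A: "{u,z} \<in> blk T \<union> red T \<or> {u',z} \<in> blk T \<union> red T"
  proof (cases "p1 \<in> u")
    case True
    then show ?thesis using tinvD(6)[OF inv u z zu(1)[symmetric] True q1 a1] by simp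
  next
    case False
    then have "p1 \<in> u'" using p1 by blast
    then show ?thesis using tinvD(6)[OF inv u' z zu(2)[symmetric] _ q1 a1] by simp
  qed
  have B: "\<not> ({u,z} \<in> blk T \<and> {u',z} \<in> blk T)"
  proof
    assume b: "{u,z} \<in> blk T \<and> {u',z} \<in> blk T"
    show False
    proof (cases "p2 \<in> u")
      case True
      then show False using tinvD(5)[OF inv u z zu(1)[symmetric] _ True q2] b a2 by blast
    next
      case False
      then have "p2 \<in> u'" using p2 by blast
      then show False using tinvD(5)[OF inv u' z zu(2)[symmetric] _ _ q2] b a2 by blast
    qed
  qed
  show ?thesis unfolding Zs_def using A B z zu by blast
qed



lemma core:
  assumes inv: "tinv G T" and nf: "noFS (fenceV a b) S T" and cf: "contains_fence G a b"
    and fa: "fence_attached G a b S"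
    and u: "u \<in> verts T" and u': "u' \<in> verts T" and uu: "u \<noteq> u'" and x: "x \<in> u" and y: "y \<in> u'"
    and xF: "x \<in> fenceV a b" and yF: "y \<in> fenceV a b \<union> S"
    and nS: "\<not> (\<exists>P\<in>verts T. S \<subseteq> P)"
  shows "5 \<le> card (Zs T u u')"
proof -
  have SV: "S \<subseteq> verts G - fenceV a b" "S \<noteq> {}" using fa unfolding fence_attached_def by blast+
  have FV: "fenceV a b \<subseteq> verts G" using cf unfolding contains_fence_def by blast
  have finZ: "finite (Zs T u u')" using tinvD(1)[OF inv] unfolding Zs_def by simp
  have noF: "\<And>U p q. U \<in> verts T \<Longrightarrow> p \<in> U \<Longrightarrow> q \<in> U \<Longrightarrow> p \<in> fenceV a b \<Longrightarrow> q \<in> fenceV a b \<union> S \<Longrightarrow> p = q"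
    using nf unfolding noFS_def by blast
  obtain m where m: "m < 12" "x = fv a b m" using xF unfolding fenceV_eq by auto
  define g where "g = (\<lambda>f. pt T (fv a b f))"
  have fvF: "\<And>f. f < 12 \<Longrightarrow> fv a b f \<in> fenceV a b" unfolding fenceV_eq by auto
  have fvG: "\<And>f. f < 12 \<Longrightarrow> fv a b f \<in> verts G" using fvF FV by blast
  have gmem: "\<And>f. f < 12 \<Longrightarrow> g f \<in> verts T \<and> fv a b f \<in> g f"
    unfolding g_def using pt_mem[OF inv fvG] by blast
  have fvinj: "\<And>f1 f2. f1 < 12 \<Longrightarrow> f2 < 12 \<Longrightarrow> fv a b f1 = fv a b f2 \<Longrightarrow> f1 = f2"
    using fv_inj[OF cf] unfolding inj_on_def by auto
  have ginj: "inj_on g {f. f < 12}"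
  proof (rule inj_onI)
    fix f1 f2 assume f1: "f1 \<in> {f. f < 12}" and f2: "f2 \<in> {f. f < 12}" and e: "g f1 = g f2"
    have "fv a b f1 \<in> g f2" using gmem[of f1] f1 e by simp
    then have "fv a b f1 = fv a b f2" using noF[of "g f2" "fv a b f1" "fv a b f2"] gmem[of f2] f1 f2 fvF by blast
    then show "f1 = f2" using fvinj f1 f2 by blast
  qed
  have gnu: "\<And>f. f < 12 \<Longrightarrow> f \<noteq> m \<Longrightarrow> g f \<noteq> u"
  proof
    fix f assume f: "f < 12" "f \<noteq> m" "g f = u"
    then have "fv a b f \<in> u" using gmem by metis
    then have "fv a b f = x" using noF[OF u _ x] fvF f xF by blast
    then show False using fvinj f m by metis
  qed
  have xy: "x \<noteq> y" using tinvD(3)[OF inv u u' uu] x y by blast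
  have sparts: "\<exists>s1 \<in> S. \<exists>s2 \<in> S. pt T s1 \<noteq> pt T s2"
  proof (rule ccontr)
    assume "\<not> ?thesis"
    then have all: "\<forall>s\<in>S. \<forall>s'\<in>S. pt T s = pt T s'" by blast
    obtain s0 where s0: "s0 \<in> S" using SV(2) by blast
    have "S \<subseteq> pt T s0"
    proof
      fix s assume "s \<in> S"
      then have "s \<in> pt T s" using pt_mem(2)[OF inv] SV(1) by blast
      then show "s \<in> pt T s0" using all s0 \<open>s \<in> S\<close> by metis
    qed
    moreover have "pt T s0 \<in> verts T" using pt_mem(1)[OF inv] SV(1) s0 by blast
    ultimately show False using nS by blast
  qed
  show ?thesis
  proof (cases "y \<in> fenceV a b")
    case True
    obtain n where n: "n < 12" "y = fv a b n" using True unfolding fenceV_eq by auto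
    have mn: "m \<noteq> n" using xy m n by blast
    have gnu': "\<And>f. f < 12 \<Longrightarrow> f \<noteq> n \<Longrightarrow> g f \<noteq> u'"
    proof
      fix f assume f: "f < 12" "f \<noteq> n" "g f = u'"
      then have "fv a b f \<in> u'" using gmem by metis
      then have "fv a b f = y" using noF[OF u' _ y] fvF f yF by blast
      then show False using fvinj f n by metis
    qed
    define P where "P = (\<lambda>f. f\<noteq>m \<and> f\<noteq>n \<and> (ADJ m f \<or> ADJ n f) \<and> (\<not>BLK m f \<or> \<not> BLK n f))"
    define Fm where "Fm = {f. f < 12 \<and> P f}"
    have cFm: "(if (m<6)=(n<6) then 5 else 3) \<le> card Fm"
      unfolding Fm_def card_filter_upt P_def using comb1' m(1) n(1) mn by simp
    have gsub: "g ` Fm \<subseteq> Zs T u u'"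
    proof
      fix z assume "z \<in> g ` Fm"
      then obtain f where f: "f < 12" "P f" "z = g f" unfolding Fm_def by blast
      have zT: "z \<in> verts T" and fz: "fv a b f \<in> z" using gmem f by auto
      have zu: "z \<noteq> u" "z \<noteq> u'" using gnu gnu' f unfolding P_def by auto
      have A: "\<exists>p\<in>u \<union> u'. {p, fv a b f} \<in> blk G \<union> red G"
      proof (cases "ADJ m f")
        case True
        then have "{x, fv a b f} \<in> blk G \<union> red G" using adj_iff[OF cf m(1) f(1)] m by simp
        then show ?thesis using x by blast
      next
        case False
        then have "ADJ n f" using f(2) unfolding P_def by blast
        then have "{y, fv a b f} \<in> blk G \<union> red G" using adj_iff[OF cf n(1) f(1)] n by simp
        then show ?thesis using y by blast
      qed
      have B: "\<exists>p\<in>u \<union> u'. {p, fv a b f} \<notin> blk G"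
      proof (cases "BLK m f")
        case False
        then have "{x, fv a b f} \<notin> blk G" using blk_iff[OF cf m(1) f(1)] m by simp
        then show ?thesis using x by blast
      next
        case True
        then have "\<not> BLK n f" using f(2) unfolding P_def by blast
        then have "{y, fv a b f} \<notin> blk G" using blk_iff[OF cf n(1) f(1)] n by simp
        then show ?thesis using y by blast
      qed
      from A obtain p1 where "p1 \<in> u \<union> u'" "{p1, fv a b f} \<in> blk G \<union> red G" by blast
      moreover from B obtain p2 where "p2 \<in> u \<union> u'" "{p2, fv a b f} \<notin> blk G" by blast
      ultimately show "z \<in> Zs T u u'" using zin[OF inv u u' zT zu _ fz _ _ fz] by blast
    qed
    have cg: "card (g ` Fm) = card Fm"
      by (rule card_image) (rule inj_on_subset[OF ginj], auto simp: Fm_def)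
    show ?thesis
    proof (cases "(m<6)=(n<6)")
      case True
      then have "5 \<le> card (g ` Fm)" using cFm cg by simp
      also have "\<dots> \<le> card (Zs T u u')" by (rule card_mono[OF finZ gsub])
      finally show ?thesis .
    next
      case False
      then have c3: "3 \<le> card (g ` Fm)" using cFm cg by simp
      from sparts obtain s1 s2 where s: "s1 \<in> S" "s2 \<in> S" "pt T s1 \<noteq> pt T s2" by blast
      have sZ: "pt T s \<in> Zs T u u' \<and> pt T s \<notin> g ` Fm" if s: "s \<in> S" for s
      proof
        have sG: "s \<in> verts G" "s \<notin> fenceV a b" using SV(1) s by auto
        have zT: "pt T s \<in> verts T" and sz: "s \<in> pt T s" using pt_mem[OF inv sG(1)] by auto
        have zu: "pt T s \<noteq> u"
        proof
          assume "pt T s = u"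
          then have "x = s" using noF[OF u x _ xF] sz s by blast
          then show False using sG xF by blast
        qed
        have zu': "pt T s \<noteq> u'"
        proof
          assume "pt T s = u'"
          then have "y = s" using noF[OF u' y _ True] sz s by blast
          then show False using sG True by blast
        qed
        have AB: "\<exists>p1\<in>u \<union> u'. {p1, s} \<in> blk G \<union> red G" "\<exists>p2\<in>u \<union> u'. {p2, s} \<notin> blk G"
        proof -
          show "\<exists>p1\<in>u \<union> u'. {p1, s} \<in> blk G \<union> red G"
          proof (cases "m < 6")
            case True then show ?thesis using fvS(1)[OF fa m(1) s] m x by blast
          next
            case False then have "n < 6" using \<open>\<not> (m<6)=(n<6)\<close> by blast
            then show ?thesis using fvS(1)[OF fa n(1) s] n y by blast
          qed
          show "\<exists>p2\<in>u \<union> u'. {p2, s} \<notin> blk G"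
          proof (cases "m < 6")
            case True then have "\<not> n < 6" using \<open>\<not> (m<6)=(n<6)\<close> by blast
            then show ?thesis using fvS(2)[OF fa n(1) s] n y by blast
          next
            case False then show ?thesis using fvS(2)[OF fa m(1) s] m x by blast
          qed
        qed
        from AB obtain p1 p2 where "p1 \<in> u \<union> u'" "{p1, s} \<in> blk G \<union> red G" "p2 \<in> u \<union> u'" "{p2, s} \<notin> blk G" by blast
        then show "pt T s \<in> Zs T u u'" using zin[OF inv u u' zT zu zu' _ sz _ _ sz] by blast
        show "pt T s \<notin> g ` Fm"
        proof
          assume "pt T s \<in> g ` Fm"
          then obtain f where f: "f < 12" "pt T s = g f" unfolding Fm_def by blast
          then have "fv a b f \<in> pt T s" using gmem by metis
          then have "fv a b f = s" using noF[OF zT _ sz] fvF f s by blast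
          then show False using fvF f sG by metis
        qed
      qed
      have "card (g ` Fm \<union> {pt T s1, pt T s2}) = card (g ` Fm) + card {pt T s1, pt T s2}"
        by (rule card_Un_disjoint) (use sZ s in \<open>auto simp: Fm_def\<close>)
      also have "card {pt T s1, pt T s2} = 2" using s(3) by simp
      finally have "5 \<le> card (g ` Fm \<union> {pt T s1, pt T s2})" using c3 by simp
      also have "\<dots> \<le> card (Zs T u u')" by (rule card_mono[OF finZ]) (use gsub sZ s in blast)
      finally show ?thesis .
    qed
  next
    case False
    then have yS: "y \<in> S" using yF by blast
    define P where "P = (\<lambda>f. f\<noteq>m \<and> (ADJ m f \<or> f < 6) \<and> (\<not>BLK m f \<or> 6 \<le> f))"
    define Fm where "Fm = {f. f < 12 \<and> P f}"
    have cFm: "5 \<le> card Fm"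
      unfolding Fm_def card_filter_upt P_def using comb2' m(1) by simp
    have gsub: "g ` Fm \<subseteq> Zs T u u'"
    proof
      fix z assume "z \<in> g ` Fm"
      then obtain f where f: "f < 12" "P f" "z = g f" unfolding Fm_def by blast
      have zT: "z \<in> verts T" and fz: "fv a b f \<in> z" using gmem f by auto
      have zu: "z \<noteq> u" using gnu f unfolding P_def by auto
      have zu': "z \<noteq> u'"
      proof
        assume "z = u'"
        then have "fv a b f \<in> u'" using fz by simp
        then have "fv a b f = y" using noF[OF u' _ y] fvF f yF by blast
        then show False using fvF f False by metis
      qed
      have A: "\<exists>p\<in>u \<union> u'. {p, fv a b f} \<in> blk G \<union> red G"
      proof (cases "ADJ m f")
        case True
        then have "{x, fv a b f} \<in> blk G \<union> red G" using adj_iff[OF cf m(1) f(1)] m by simp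
        then show ?thesis using x by blast
      next
        case False
        then have "f < 6" using f(2) unfolding P_def by blast
        then have "{fv a b f, y} \<in> blk G" using fvS(1)[OF fa f(1) yS] by simp
        then have "{y, fv a b f} \<in> blk G \<union> red G" by (simp add: insert_commute)
        then show ?thesis using y by blast
      qed
      have B: "\<exists>p\<in>u \<union> u'. {p, fv a b f} \<notin> blk G"
      proof (cases "BLK m f")
        case False
        then have "{x, fv a b f} \<notin> blk G" using blk_iff[OF cf m(1) f(1)] m by simp
        then show ?thesis using x by blast
      next
        case True
        then have "\<not> f < 6" using f(2) unfolding P_def by auto
        then have "{fv a b f, y} \<notin> blk G" using fvS(2)[OF fa f(1) yS] by simp
        then have "{y, fv a b f} \<notin> blk G" by (simp add: insert_commute)
        then show ?thesis using y by blast
      qed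
      from A obtain p1 where "p1 \<in> u \<union> u'" "{p1, fv a b f} \<in> blk G \<union> red G" by blast
      moreover from B obtain p2 where "p2 \<in> u \<union> u'" "{p2, fv a b f} \<notin> blk G" by blast
      ultimately show "z \<in> Zs T u u'" using zin[OF inv u u' zT zu zu' _ fz _ _ fz] by blast
    qed
    have cg: "card (g ` Fm) = card Fm"
      by (rule card_image) (rule inj_on_subset[OF ginj], auto simp: Fm_def)
    have "5 \<le> card (g ` Fm)" using cFm cg by simp
    also have "\<dots> \<le> card (Zs T u u')" by (rule card_mono[OF finZ gsub])
    finally show ?thesis .
  qed
qed



theorem lemma4p8:
  fixes G :: "'v trigraph" and a b :: "nat \<Rightarrow> 'v" and S :: "'v set"
    and ps :: "('v set \<times> 'v set) list" and i :: nat
  assumes "wf_trigraph G"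
    and "contains_fence G a b"
    and "fence_attached G a b S"
    and "attachment_rule G a b S"
    and "partial_seq 4 G ps"
    and "i < length ps"
    and "\<exists>x \<in> fenceV a b. \<exists>y \<in> fenceV a b \<union> S. involves (ps ! i) x y"
    and "\<forall>j < i. \<not> (\<exists>x \<in> fenceV a b. \<exists>y \<in> fenceV a b \<union> S. involves (ps ! j) x y)"
  shows "\<exists>P \<in> verts (run G (take i ps)). S \<subseteq> P"
proof (rule ccontr)
  assume nS: "\<not> (\<exists>P \<in> verts (run G (take i ps)). S \<subseteq> P)"
  define T where "T = run G (take i ps)"
  define u where "u = fst (ps ! i)"
  define u' where "u' = snd (ps ! i)"
  have inv: "tinv G T" unfolding T_def using inv_run[OF assms(1,5)] assms(6) by simp
  have nf: "noFS (fenceV a b) S T" unfolding T_def using noFS_run[OF assms(5) _ assms(6) assms(8)] by simp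
  have uT: "u \<in> verts T" "u' \<in> verts T" "u \<noteq> u'"
    using assms(5,6) unfolding partial_seq_def T_def u_def u'_def by blast+
  have T': "run G (take (Suc i) ps) = contract T u u'" unfolding T_def u_def u'_def by (rule run_Suc[OF assms(6)])
  have inv': "tinv G (contract T u u')" using inv_contract[OF inv uT] .
  have md: "max_red_deg_le (contract T u u') 4"
    using assms(5,6) T' unfolding partial_seq_def by (metis Suc_leI)
  have wT: "u \<union> u' \<in> verts (contract T u u')" by (simp add: contract_def)
  have rd: "red_degree (contract T u u') (u \<union> u') \<le> 4" using md wT unfolding max_red_deg_le_def by blast
  have sub: "Zs T u u' \<subseteq> {z \<in> verts (contract T u u'). {u \<union> u', z} \<in> red (contract T u u')}"
    unfolding Zs_def contract_def by auto
  have "card (Zs T u u') \<le> red_degree (contract T u u') (u \<union> u')"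
    unfolding red_degree_def by (rule card_mono) (use tinvD(1)[OF inv'] sub in auto)
  with rd have le4: "card (Zs T u u') \<le> 4" by simp
  from assms(7) obtain x y where xy: "x \<in> fenceV a b" "y \<in> fenceV a b \<union> S" "involves (ps ! i) x y" by blast
  have "(x \<in> u \<and> y \<in> u') \<or> (x \<in> u' \<and> y \<in> u)" using xy(3) unfolding involves_def u_def u'_def by blast
  then have "5 \<le> card (Zs T u u')"
  proof
    assume "x \<in> u \<and> y \<in> u'"
    then show ?thesis using core[OF inv nf assms(2,3) uT(1,2,3) _ _ xy(1,2)] nS unfolding T_def by blast
  next
    assume "x \<in> u' \<and> y \<in> u"
    then have "5 \<le> card (Zs T u' u)" using core[OF inv nf assms(2,3) uT(2,1) uT(3)[symmetric] _ _ xy(1,2)] nS unfolding T_def by blast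
    then show ?thesis using Zs_sym by metis
  qed
  with le4 show False by simp
qed


end
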